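(* Let $\varphi:[0,1)\to(0,\infty)$ be continuous and regularly varying at $1$ with index $\rho>0$, and let $\kappa(t):=1$, $t\in[0,1)$. Let $c_0:=0<c_1<c_2<\dots<1$ be such that $\|\mathbb 1_{(c_n,1)}\kappa\|^2=2^{-n}\|\kappa\|^2$, set $J_n=(c_{n-1},c_n)$ and $\omega_n=\|\mathbb 1_{J_n}\kappa\|\cdot\|\mathbb 1_{J_n}\varphi\|$ (norms in $L^2(0,1)$). Then \[ \omega_n\asymp 2^{-n}\varphi(1-2^{-n}), \] i.e. there exist $C_1,C_2>0$ with $C_1\,2^{-n}\varphi(1-2^{-n})\le\omega_n\le C_2\,2^{-n}\varphi(1-2^{-n})$ for all $n\in\mathbb N$.
   Context: A measurable function $\psi:[1,\infty)\to(0,\infty)$ is regularly varying with index $\rho_\psi\in\mathbb R$ if $\lim_{x\to\infty}\psi(kx)/\psi(x)=k^{\rho_\psi}$ for every $k>0$. A function $\varphi:[0,1)\to(0,\infty)$ is regularly varying at $1$ with index $\rho$ if $\psi(x):=\varphi\big(\frac{x-1}{x}\big)$, $x\in[1,\infty)$, is regularly varying with index $\rho$. *)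

theory Defs
  imports "HOL-Analysis.Analysis"
begin

definition L2norm01 :: "(real \<Rightarrow> real) \<Rightarrow> real" where
  "L2norm01 f = sqrt (LINT x:{0<..<1}|lborel. (f x)\<^sup>2)"

definition regularly_varying :: "(real \<Rightarrow> real) \<Rightarrow> real \<Rightarrow> bool" where
  "regularly_varying \<psi> \<rho> \<longleftrightarrow>
     set_borel_measurable lborel {1..} \<psi> \<and>
     (\<forall>x\<in>{1..}. \<psi> x > 0) \<and>
     (\<forall>k>0. ((\<lambda>x. \<psi> (k * x) / \<psi> x) \<longlongrightarrow> k powr \<rho>) at_top)"

definition regularly_varying_at_1 :: "(real \<Rightarrow> real) \<Rightarrow> real \<Rightarrow> bool" where
  "regularly_varying_at_1 \<phi> \<rho> \<longleftrightarrow> regularly_varying (\<lambda>x. \<phi> ((x - 1) / x)) \<rho>"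

end

theory Submission
  imports Defs
begin

lemma baire_step:
  fixes g :: "real \<Rightarrow> real"
  assumes cont: "continuous_on {1..} g"
    and lim: "\<forall>k\<in>{1..2}. \<exists>N. \<forall>x\<ge>N. \<bar>g (k*x) - g x\<bar> \<le> B"
  shows "\<exists>N p q. 1 \<le> N \<and> 1 \<le> p \<and> p < q \<and> q \<le> 2 \<and> (\<forall>k\<in>{p..q}. \<forall>x\<ge>N. \<bar>g (k*x) - g x\<bar> \<le> B)"
proof -
  define S :: "real set" where "S = {1..2}"
  define F where "F = (\<lambda>N::nat. \<Inter>x\<in>{max 1 (real N)..}. {k\<in>S. \<bar>g (k*x) - g x\<bar> \<le> B})"
  have memF: "k \<in> F N \<longleftrightarrow> k \<in> S \<and> (\<forall>x\<ge>max 1 (real N). \<bar>g (k*x) - g x\<bar> \<le> B)" for k N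
    unfolding F_def by auto
  have closedF: "closed (F N)" for N
    unfolding F_def
  proof (rule closed_INT, rule ballI)
    fix x assume x: "x \<in> {max 1 (real N)..}"
    have c1: "continuous_on S (\<lambda>k. k * x)" by (intro continuous_intros)
    have x1: "x \<ge> 1" using x by auto
    have "(\<lambda>k. k * x) ` S \<subseteq> {1..}"
    proof
      fix y assume "y \<in> (\<lambda>k. k * x) ` S"
      then obtain k where "k \<in> S" "y = k * x" by blast
      hence "k \<ge> 1" by (simp add: S_def)
      hence "1 * 1 \<le> k * x" using x1 by (intro mult_mono) auto
      thus "y \<in> {1..}" using \<open>y = k * x\<close> by simp
    qed
    hence "continuous_on S (\<lambda>k. g (k * x))"
      using continuous_on_compose2[OF cont c1] by blast
    hence "continuous_on S (\<lambda>k. \<bar>g (k*x) - g x\<bar>)" by (intro continuous_intros)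
    thus "closed {k \<in> S. \<bar>g (k*x) - g x\<bar> \<le> B}"
      by (intro continuous_on_closed_Collect_le) (auto simp: S_def)
  qed
  have cover: "\<exists>N. k \<in> F N" if "k \<in> S" for k
  proof -
    have "k \<in> {1..2}" using that by (simp add: S_def)
    then obtain N0 where N0: "\<forall>x\<ge>N0. \<bar>g (k*x) - g x\<bar> \<le> B" using lim by blast
    obtain N :: nat where N: "N0 \<le> real N" using real_arch_simple by blast
    have "\<forall>x\<ge>max 1 (real N). \<bar>g (k*x) - g x\<bar> \<le> B"
    proof (intro allI impI)
      fix x assume "max 1 (real N) \<le> x"
      hence "N0 \<le> x" using N by linarith
      thus "\<bar>g (k*x) - g x\<bar> \<le> B" using N0 by blast
    qed
    hence "k \<in> F N" using that memF by blast
    thus ?thesis by blast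
  qed
  have "\<exists>N. \<not> S \<subseteq> closure (S - F N)"
  proof (rule ccontr)
    assume "\<not> ?thesis"
    hence all: "\<forall>N. S \<subseteq> closure (S - F N)" by blast
    have Sc: "S \<subseteq> closure (\<Inter> (range (\<lambda>N. S - F N)))"
    proof (rule Baire)
      show "closed S" by (simp add: S_def)
      show "countable (range (\<lambda>N. S - F N))" by simp
      fix T assume "T \<in> range (\<lambda>N. S - F N)"
      then obtain N where T: "T = S - F N" by blast
      have "openin (top_of_set S) (S \<inter> (- F N))"
        by (rule openin_open_Int) (use closedF in \<open>auto simp: open_Compl\<close>)
      moreover have "S \<inter> (- F N) = T" using T by auto
      ultimately show "openin (top_of_set S) T \<and> S \<subseteq> closure T" using all T by auto
    qed
    have E: "\<Inter> (range (\<lambda>N. S - F N)) = {}" using cover by blast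
    have "1 \<in> S" by (simp add: S_def)
    moreover have "S \<subseteq> {}" using Sc unfolding E closure_empty .
    ultimately show False by blast
  qed
  then obtain N k0 where k0: "k0 \<in> S" "k0 \<notin> closure (S - F N)" by blast
  then obtain e where e: "e > 0" "\<forall>y\<in>S - F N. \<not> dist y k0 < e"
    unfolding closure_approachable by blast
  define p where "p = max 1 (k0 - e/2)"
  define q where "q = min 2 (k0 + e/2)"
  have pq: "1 \<le> p" "p < q" "q \<le> 2" using k0(1) e(1) unfolding p_def q_def S_def by auto
  have "\<forall>k\<in>{p..q}. k \<in> F N"
  proof
    fix k assume k: "k \<in> {p..q}"
    hence "k \<in> S" "dist k k0 < e" using pq e(1) unfolding S_def p_def q_def dist_real_def by auto
    thus "k \<in> F N" using e(2) by blast
  qed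
  hence "\<forall>k\<in>{p..q}. \<forall>x\<ge>max 1 (real N). \<bar>g (k*x) - g x\<bar> \<le> B" by (auto simp: memF)
  thus ?thesis using pq by (intro exI[of _ "max 1 (real N)"] exI[of _ p] exI[of _ q]) auto
qed

lemma uct_bound:
  fixes g :: "real \<Rightarrow> real"
  assumes cont: "continuous_on {1..} g"
    and lim: "\<forall>k\<in>{1..2}. \<exists>N. \<forall>x\<ge>N. \<bar>g (k*x) - g x\<bar> \<le> B"
  shows "\<exists>X L. X \<ge> 1 \<and> (\<forall>x\<ge>X. \<forall>w\<in>{1/2..1}. \<bar>g (w*x) - g x\<bar> \<le> L)"
proof -
  obtain N p q where Npq: "1 \<le> N" "1 \<le> p" "p < q" "q \<le> 2"
    and H: "\<forall>k\<in>{p..q}. \<forall>x\<ge>N. \<bar>g (k*x) - g x\<bar> \<le> B"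
    using baire_step[OF cont lim] by blast
  have B0: "B \<ge> 0" using H Npq by force
  define r where "r = p / q"
  have r: "0 < r" "r < 1" using Npq by (auto simp: r_def)
  have step2: "\<bar>g (w*x) - g x\<bar> \<le> 2*B" if w: "w \<in> {r..1}" and x: "x \<ge> 2*N" for w x
  proof -
    define y where "y = x / q"
    have "y \<ge> N"
    proof -
      have "x / q \<ge> x / 2" using Npq x by (intro divide_left_mono) auto
      moreover have "x / 2 \<ge> N" using x by simp
      ultimately show ?thesis unfolding y_def by linarith
    qed
    define u where "u = w * q"
    have "u \<ge> p" using w Npq by (auto simp: u_def r_def field_simps)
    moreover have "u \<le> q" using w Npq by (auto simp: u_def mult_left_le_one_le)
    ultimately have h1: "\<bar>g (u*y) - g y\<bar> \<le> B" using H \<open>y \<ge> N\<close> by auto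
    have h2: "\<bar>g (q*y) - g y\<bar> \<le> B" using H \<open>y \<ge> N\<close> Npq by auto
    have "u * y = w * x" "q * y = x" using Npq by (auto simp: u_def y_def)
    thus ?thesis using h1 h2 by auto
  qed
  have ind: "\<forall>w\<in>{r^m..1}. \<forall>x\<ge>2*N / r^m. \<bar>g (w*x) - g x\<bar> \<le> m*(2*B)" for m
  proof (induction m)
    case 0
    then show ?case by auto
  next
    case (Suc m)
    show ?case
    proof (intro ballI allI impI)
      fix w x assume w: "w \<in> {r^Suc m..1}" and x: "2*N / r^Suc m \<le> x"
      have rpow: "r^Suc m \<le> r^m" "r^Suc m > 0" "r^m > 0" "r^m \<le> 1" "r^Suc m \<le> 1"
        using r power_le_one[of r m] power_le_one[of r "Suc m"] power_decreasing[of m "Suc m" r]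
        by (simp_all del: power_Suc)
      have "2*N / r^m \<le> 2*N / r^Suc m"
        by (rule divide_left_mono) (use rpow Npq in auto)
      hence xm: "x \<ge> 2*N / r^m" using x by linarith
      have "2*N / 1 \<le> 2*N / r^Suc m"
        by (rule divide_left_mono) (use rpow Npq in auto)
      hence x2: "x \<ge> 2*N" using x by simp
      show "\<bar>g (w*x) - g x\<bar> \<le> real (Suc m) * (2*B)"
      proof (cases "w \<ge> r^m")
        case True
        hence "\<bar>g (w*x) - g x\<bar> \<le> m*(2*B)" using Suc.IH w xm by auto
        thus ?thesis using B0 by (simp add: algebra_simps)
      next
        case False
        show ?thesis
        proof (cases "m = 0")
          case True
          thus ?thesis using step2[of w x] w x2 by simp
        next
          case m0: False
        have "r^m \<le> r^1" using r m0 by (intro power_decreasing) auto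
        hence wr: "w / r \<in> {r^m..1}" using w False r
          by (auto simp: field_simps power_Suc2)
        have rx: "r * x \<ge> 2*N / r^m" using x r rpow by (auto simp: field_simps power_Suc2)
        have a: "\<bar>g ((w/r)*(r*x)) - g (r*x)\<bar> \<le> m*(2*B)" using Suc.IH wr rx by blast
        have b: "\<bar>g (r*x) - g x\<bar> \<le> 2*B" using step2[of r x] r x2 by auto
        have "(w/r)*(r*x) = w*x" using r by auto
        thus ?thesis using a b by (simp add: algebra_simps)
        qed
      qed
    qed
  qed
  obtain m where m: "r^m < 1/2" using real_arch_pow_inv[of "1/2" r] r by auto
  have fin: "\<forall>x\<ge>max 1 (2*N / r^m). \<forall>w\<in>{1/2..1}. \<bar>g (w*x) - g x\<bar> \<le> real m*(2*B)"
  proof (intro allI impI ballI)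
    fix x w :: real assume x: "max 1 (2*N / r^m) \<le> x" and w: "w \<in> {1/2..1}"
    hence "w \<in> {r^m..1}" "x \<ge> 2*N / r^m" using m by auto
    thus "\<bar>g (w*x) - g x\<bar> \<le> real m*(2*B)" using ind[of m] by blast
  qed
  show ?thesis
    by (rule exI[of _ "max 1 (2*N / r^m)"], rule exI[of _ "real m*(2*B)"]) (use fin in auto)
qed

lemma phi_ratio:
  fixes \<phi> :: "real \<Rightarrow> real" and \<rho> :: real
  assumes phi_pos: "\<forall>t\<in>{0..<1}. \<phi> t > 0"
    and phi_cont: "continuous_on {0..<1} \<phi>"
    and phi_rv: "regularly_varying_at_1 \<phi> \<rho>"
    and rho_pos: "\<rho> > 0"
  shows "\<exists>A B. A > 0 \<and> B > 0 \<and> (\<forall>d. 0 < d \<longrightarrow> d \<le> 1/2 \<longrightarrow> (\<forall>t\<in>{1-2*d..1-d}.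
            A * \<phi> (1-d) \<le> \<phi> t \<and> \<phi> t \<le> B * \<phi> (1-d)))"
proof -
  define \<psi> where "\<psi> = (\<lambda>x::real. \<phi> ((x - 1) / x))"
  define g where "g = (\<lambda>x. ln (\<psi> x))"
  have map01: "(x - 1) / x \<in> {0..<1}" if "x \<ge> 1" for x :: real
    using that by (auto simp: field_simps)
  have psi_pos: "\<psi> x > 0" if "x \<ge> 1" for x
    using phi_pos map01[OF that] by (simp add: \<psi>_def)
  have cont: "continuous_on {1..} g"
  proof -
    have c1: "continuous_on {1..} (\<lambda>x::real. (x - 1) / x)"
      by (intro continuous_intros) auto
    have "continuous_on {1..} \<psi>"
      unfolding \<psi>_def using continuous_on_compose2[OF phi_cont c1] map01 by blast
    moreover have "\<forall>x\<in>{1..}. \<psi> x \<noteq> 0" using psi_pos by (metis atLeast_iff less_irrefl)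
    ultimately show ?thesis unfolding g_def
      by (intro continuous_on_ln) auto
  qed
  have rv: "\<forall>k>0. ((\<lambda>x. \<psi> (k * x) / \<psi> x) \<longlongrightarrow> k powr \<rho>) at_top"
    using phi_rv unfolding regularly_varying_at_1_def regularly_varying_def \<psi>_def by blast
  define B0 where "B0 = 1 + \<rho> * ln 2"
  have lim: "\<forall>k\<in>{1..2}. \<exists>N. \<forall>x\<ge>N. \<bar>g (k*x) - g x\<bar> \<le> B0"
  proof
    fix k :: real assume k: "k \<in> {1..2}"
    have T1: "((\<lambda>x. ln (\<psi> (k * x) / \<psi> x)) \<longlongrightarrow> ln (k powr \<rho>)) at_top"
      using rv k by (intro tendsto_ln) auto
    have EV: "eventually (\<lambda>x. ln (\<psi> (k * x) / \<psi> x) = g (k*x) - g x) at_top"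
    proof (rule eventually_mono[OF eventually_ge_at_top[of 1]])
      fix x :: real assume x: "x \<ge> 1"
      have "k * x \<ge> 1 * 1" using k x by (intro mult_mono) auto
      thus "ln (\<psi> (k * x) / \<psi> x) = g (k*x) - g x"
        using psi_pos[of "k*x"] psi_pos[of x] x unfolding g_def by (simp add: ln_div)
    qed
    have "((\<lambda>x. g (k*x) - g x) \<longlongrightarrow> ln (k powr \<rho>)) at_top"
      by (rule Lim_transform_eventually[OF T1 EV])
    from tendstoD[OF this, of 1] obtain N where N: "\<forall>x\<ge>N. dist (g (k*x) - g x) (ln (k powr \<rho>)) < 1"
      by (auto simp: eventually_at_top_linorder)
    have lk: "ln (k powr \<rho>) = \<rho> * ln k" using k by (simp add: ln_powr)
    have lk0: "0 \<le> ln k" "ln k \<le> ln 2" using k by auto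
    have "\<rho> * ln k \<le> \<rho> * ln 2" using lk0 rho_pos by (intro mult_left_mono) auto
    moreover have "0 \<le> \<rho> * ln k" using lk0 rho_pos by simp
    ultimately have lb: "\<bar>ln (k powr \<rho>)\<bar> \<le> \<rho> * ln 2" unfolding lk by linarith
    have "\<forall>x\<ge>N. \<bar>g (k*x) - g x\<bar> \<le> B0"
    proof (intro allI impI)
      fix x assume "x \<ge> N"
      hence "\<bar>(g (k*x) - g x) - ln (k powr \<rho>)\<bar> < 1" using N by (simp add: dist_real_def)
      thus "\<bar>g (k*x) - g x\<bar> \<le> B0" using lb unfolding B0_def by arith
    qed
    then show "\<exists>N. \<forall>x\<ge>N. \<bar>g (k*x) - g x\<bar> \<le> B0" by blast
  qed
  obtain X L where XL: "X \<ge> 1" "\<forall>x\<ge>X. \<forall>w\<in>{1/2..1}. \<bar>g (w*x) - g x\<bar> \<le> L"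
    using uct_bound[OF cont lim] by blast
  define K where "K = {0..1 - 1/X}"
  have X0: "1/X > 0" using XL(1) by simp
  have K01: "K \<subseteq> {0..<1}" unfolding K_def using X0 by (auto simp del: zero_less_divide_1_iff)
  have Kne: "K \<noteq> {}" "compact K" using XL(1) by (auto simp: K_def)
  have contK: "continuous_on K \<phi>" using continuous_on_subset[OF phi_cont K01] .
  obtain tmin where tmin: "tmin \<in> K" "\<forall>y\<in>K. \<phi> tmin \<le> \<phi> y"
    using continuous_attains_inf[OF Kne(2,1) contK] by blast
  obtain tmax where tmax: "tmax \<in> K" "\<forall>y\<in>K. \<phi> y \<le> \<phi> tmax"
    using continuous_attains_sup[OF Kne(2,1) contK] by blast
  define m0 where "m0 = \<phi> tmin"
  define M0 where "M0 = \<phi> tmax"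
  have m0: "m0 > 0" using tmin K01 phi_pos by (auto simp: m0_def)
  have M0: "M0 \<ge> m0" using tmin tmax by (auto simp: m0_def M0_def)
  define A where "A = min (exp (-L)) (m0 / M0)"
  define B where "B = max (exp L) (M0 / m0)"
  have Apos: "A > 0" using m0 M0 by (simp add: A_def)
  have Bpos: "B > 0" by (simp add: B_def max.strict_coboundedI1)
  have "\<forall>d. 0 < d \<longrightarrow> d \<le> 1/2 \<longrightarrow> (\<forall>t\<in>{1-2*d..1-d}.
            A * \<phi> (1-d) \<le> \<phi> t \<and> \<phi> t \<le> B * \<phi> (1-d))"
  proof (intro allI impI ballI)
    fix d t :: real assume d: "0 < d" "d \<le> 1/2" and t: "t \<in> {1-2*d..1-d}"
    have t01: "t \<in> {0..<1}" "1 - d \<in> {0..<1}" using d t by auto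
    have pt: "\<phi> t > 0" "\<phi> (1-d) > 0" using t01 phi_pos by auto
    show "A * \<phi> (1-d) \<le> \<phi> t \<and> \<phi> t \<le> B * \<phi> (1-d)"
    proof (cases "1/d \<ge> X")
      case True
      define x where "x = 1/d"
      define w where "w = d / (1 - t)"
      have w: "w \<in> {1/2..1}" using d t by (auto simp: w_def field_simps)
      have wx: "w * x = 1 / (1 - t)" using d by (simp add: w_def x_def)
      have "1 - t \<noteq> 0" using t01 by auto
      hence "(w*x - 1) / (w*x) = t" unfolding wx by (simp add: field_simps)
      hence G1: "g (w*x) = ln (\<phi> t)" by (simp add: g_def \<psi>_def)
      have "(x - 1) / x = 1 - d" using d by (simp add: x_def field_simps)
      hence G2: "g x = ln (\<phi> (1-d))" by (simp add: g_def \<psi>_def)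
      have "\<bar>g (w*x) - g x\<bar> \<le> L" using XL(2) True w unfolding x_def by blast
      hence "\<bar>ln (\<phi> t) - ln (\<phi> (1-d))\<bar> \<le> L" unfolding G1 G2 .
      hence l1: "ln (\<phi> t) \<le> ln (\<phi> (1-d)) + L" and l2: "ln (\<phi> (1-d)) - L \<le> ln (\<phi> t)" by auto
      have "exp (ln (\<phi> t)) \<le> exp (ln (\<phi> (1-d)) + L)" using l1 by simp
      hence "\<phi> t \<le> exp (ln (\<phi> (1-d)) + L)" using pt by simp
      also have "\<dots> = exp L * \<phi> (1-d)" using pt by (simp add: exp_add)
      also have "\<dots> \<le> B * \<phi> (1-d)" using pt by (intro mult_right_mono) (auto simp: B_def)
      finally have u: "\<phi> t \<le> B * \<phi> (1-d)" .
      have "A * \<phi> (1-d) \<le> exp (-L) * \<phi> (1-d)" using pt by (intro mult_right_mono) (auto simp: A_def)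
      also have "\<dots> = exp (ln (\<phi> (1-d)) - L)" using pt by (simp add: exp_diff exp_minus field_simps)
      also have "\<dots> \<le> exp (ln (\<phi> t))" using l2 by simp
      also have "\<dots> = \<phi> t" using pt by simp
      finally show ?thesis using u by simp
    next
      case False
      hence "1 - d \<le> 1 - 1/X" using d XL(1) by (auto simp: field_simps)
      hence inK: "t \<in> K" "1 - d \<in> K" using t01 t unfolding K_def by auto
      have b1: "m0 \<le> \<phi> t" "\<phi> t \<le> M0" "m0 \<le> \<phi> (1-d)" "\<phi> (1-d) \<le> M0"
        using inK tmin tmax by (auto simp: m0_def M0_def)
      have "A * \<phi> (1-d) \<le> (m0 / M0) * M0" using b1 pt m0 M0
        by (intro mult_mono) (auto simp: A_def)
      also have "\<dots> \<le> \<phi> t" using b1 m0 M0 by simp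
      finally have lo: "A * \<phi> (1-d) \<le> \<phi> t" .
      have "\<phi> t \<le> (M0 / m0) * m0" using b1 m0 by simp
      also have "\<dots> \<le> B * \<phi> (1-d)" using b1 m0 M0 Bpos
        by (intro mult_mono) (auto simp: B_def)
      finally show ?thesis using lo by simp
    qed
  qed
  thus ?thesis using Apos Bpos by blast
qed

lemma ind_const:
  fixes a b c :: real
  assumes "a \<le> b"
  shows "has_bochner_integral lborel (\<lambda>x. indicator {a<..<b} x * c) ((b - a) * c)"
  using has_bochner_integral_indicator[of "{a<..<b}" lborel c] assms
  by (simp add: measure_lborel_Ioo emeasure_lborel_Ioo)

lemma L2_ind:
  fixes a b :: real
  assumes "0 \<le> a" "a \<le> b" "b \<le> 1"
  shows "L2norm01 (\<lambda>t. indicator {a<..<b} t * 1) = sqrt (b - a)"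
proof -
  have "(\<lambda>x. indicator {0<..<1} x *\<^sub>R (indicator {a<..<b} x * 1)\<^sup>2) = (\<lambda>x. indicator {a<..<b} x * (1::real))"
    using assms by (auto simp: indicator_def fun_eq_iff)
  hence "(LINT x:{0<..<1}|lborel. (indicator {a<..<b} x * 1)\<^sup>2) = (b - a) * 1"
    unfolding set_lebesgue_integral_def
    using has_bochner_integral_integral_eq[OF ind_const[OF assms(2), of 1]] by simp
  thus ?thesis by (simp add: L2norm01_def)
qed

lemma L2_one: "L2norm01 (\<lambda>t. 1) = 1"
proof -
  have e: "(\<lambda>x::real. indicator {0<..<1} x *\<^sub>R ((1::real))\<^sup>2) = indicator {0<..<1}"
    by (auto simp: indicator_def fun_eq_iff)
  have h: "has_bochner_integral lborel (indicator {0<..<1::real}) (1::real)"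
    using ind_const[of 0 1 1] by simp
  have "(LINT x:{0<..<1::real}|lborel. ((1::real))\<^sup>2) = 1"
  proof -
    have "(LINT x:{0<..<1::real}|lborel. ((1::real))\<^sup>2) = (LINT x|lborel. indicator {0<..<1::real} x)"
      unfolding set_lebesgue_integral_def by (rule Bochner_Integration.integral_cong) auto
    also have "\<dots> = 1" by (rule has_bochner_integral_integral_eq[OF h])
    finally show ?thesis .
  qed
  thus ?thesis by (simp add: L2norm01_def)
qed

lemma L2_bounds:
  fixes \<phi> :: "real \<Rightarrow> real" and a b lo hi :: real
  assumes ab: "0 \<le> a" "a < b" "b < 1" and cont: "continuous_on {0..<1} \<phi>"
    and bd: "\<forall>t\<in>{a..b}. lo \<le> \<phi> t \<and> \<phi> t \<le> hi" and lo: "0 \<le> lo"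
  shows "lo * sqrt (b-a) \<le> L2norm01 (\<lambda>t. indicator {a<..<b} t * \<phi> t) \<and>
         L2norm01 (\<lambda>t. indicator {a<..<b} t * \<phi> t) \<le> hi * sqrt (b-a)"
proof -
  have eq: "(\<lambda>x. indicator {0<..<1} x *\<^sub>R (indicator {a<..<b} x * \<phi> x)\<^sup>2) = (\<lambda>x. indicator {a<..<b} x * (\<phi> x)\<^sup>2)"
    using ab by (auto simp: indicator_def fun_eq_iff)
  define I where "I = (LINT x|lborel. indicator {a<..<b} x * (\<phi> x)\<^sup>2)"
  have L: "L2norm01 (\<lambda>t. indicator {a<..<b} t * \<phi> t) = sqrt I"
    unfolding L2norm01_def set_lebesgue_integral_def eq I_def ..
  have "continuous_on {a..b} (\<lambda>x. (\<phi> x)\<^sup>2)"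
    using ab by (intro continuous_intros continuous_on_subset[OF cont]) auto
  hence "set_integrable lborel {a..b} (\<lambda>x. (\<phi> x)\<^sup>2)"
    unfolding set_integrable_def by (intro borel_integrable_compact) auto
  hence "set_integrable lborel {a<..<b} (\<lambda>x. (\<phi> x)\<^sup>2)"
    by (rule set_integrable_subset) auto
  hence int: "integrable lborel (\<lambda>x. indicator {a<..<b} x * (\<phi> x)\<^sup>2)"
    unfolding set_integrable_def by simp
  have hl: "has_bochner_integral lborel (\<lambda>x. indicator {a<..<b} x * lo\<^sup>2) ((b - a) * lo\<^sup>2)"
    using ind_const ab by simp
  have hh: "has_bochner_integral lborel (\<lambda>x. indicator {a<..<b} x * hi\<^sup>2) ((b - a) * hi\<^sup>2)"
    using ind_const ab by simp
  have "(b - a) * lo\<^sup>2 \<le> I"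
    unfolding I_def has_bochner_integral_integral_eq[OF hl, symmetric]
  proof (rule integral_mono[OF integrable.intros[OF hl] int])
    fix x show "indicator {a<..<b} x * lo\<^sup>2 \<le> indicator {a<..<b} x * (\<phi> x)\<^sup>2"
      using bd lo by (cases "x \<in> {a<..<b}") (auto intro!: power_mono)
  qed
  moreover have "I \<le> (b - a) * hi\<^sup>2"
    unfolding I_def has_bochner_integral_integral_eq[OF hh, symmetric]
  proof (rule integral_mono[OF int integrable.intros[OF hh]])
    fix x
    have "(\<phi> x)\<^sup>2 \<le> hi\<^sup>2" if "x \<in> {a<..<b}"
    proof -
      have "x \<in> {a..b}" using that by auto
      hence "lo \<le> \<phi> x" "\<phi> x \<le> hi" using bd by auto
      thus ?thesis using lo by (intro power_mono) auto
    qed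
    thus "indicator {a<..<b} x * (\<phi> x)\<^sup>2 \<le> indicator {a<..<b} x * hi\<^sup>2"
      by (cases "x \<in> {a<..<b}") auto
  qed
  ultimately have s1: "sqrt ((b - a) * lo\<^sup>2) \<le> sqrt I" "sqrt I \<le> sqrt ((b - a) * hi\<^sup>2)" by auto
  have hi0: "0 \<le> hi" using bd lo ab by force
  have "sqrt ((b - a) * lo\<^sup>2) = lo * sqrt (b - a)" "sqrt ((b - a) * hi\<^sup>2) = hi * sqrt (b - a)"
    using lo hi0 by (simp_all add: real_sqrt_mult)
  thus ?thesis using s1 L by simp
qed


theorem lemma5p9:
  fixes \<phi> :: "real \<Rightarrow> real" and \<rho> :: real and c :: "nat \<Rightarrow> real"
  assumes phi_pos: "\<forall>t\<in>{0..<1}. \<phi> t > 0"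
    and phi_cont: "continuous_on {0..<1} \<phi>"
    and phi_rv: "regularly_varying_at_1 \<phi> \<rho>"
    and rho_pos: "\<rho> > 0"
    and c0: "c 0 = 0"
    and c_mono: "strict_mono c"
    and c_lt1: "\<forall>n. c n < 1"
    and c_norm: "\<forall>n. (L2norm01 (\<lambda>t. indicator {c n<..<1} t * 1))\<^sup>2
                     = 2 powr (- real n) * (L2norm01 (\<lambda>t. 1))\<^sup>2"
  shows "\<exists>C1 C2. C1 > 0 \<and> C2 > 0 \<and>
           (\<forall>n\<ge>1.
              C1 * 2 powr (- real n) * \<phi> (1 - 2 powr (- real n))
                \<le> L2norm01 (\<lambda>t. indicator {c (n-1)<..<c n} t * 1)
                   * L2norm01 (\<lambda>t. indicator {c (n-1)<..<c n} t * \<phi> t) \<and>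
              L2norm01 (\<lambda>t. indicator {c (n-1)<..<c n} t * 1)
                   * L2norm01 (\<lambda>t. indicator {c (n-1)<..<c n} t * \<phi> t)
                \<le> C2 * 2 powr (- real n) * \<phi> (1 - 2 powr (- real n)))"
proof -
  define d where "d = (\<lambda>n::nat. 2 powr (- real n))"
  have dpos: "d n > 0" for n by (simp add: d_def)
  have c_ge0: "c n \<ge> 0" for n using strict_mono_less_eq[OF c_mono, of 0 n] c0 by simp
  have c_eq: "c n = 1 - d n" for n
  proof -
    have cl: "c n \<le> 1" using c_lt1 by (simp add: less_imp_le)
    have "(L2norm01 (\<lambda>t. indicator {c n<..<1} t * 1))\<^sup>2 = 1 - c n"
      using L2_ind[OF c_ge0 cl] cl by simp
    moreover have "(L2norm01 (\<lambda>t. indicator {c n<..<1} t * 1))\<^sup>2 = d n"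
      using c_norm L2_one by (simp add: d_def)
    ultimately show ?thesis by simp
  qed
  have dprev: "d (n-1) = 2 * d n" if "n \<ge> 1" for n
  proof -
    have "- real (n-1) = 1 + (- real n)" using that by (simp add: of_nat_diff)
    hence "d (n-1) = 2 powr (1 + (- real n))" by (simp add: d_def)
    also have "\<dots> = 2 powr 1 * 2 powr (- real n)" by (rule powr_add)
    also have "\<dots> = 2 * d n" by (simp add: d_def)
    finally show ?thesis .
  qed
  have dle: "d n \<le> 1/2" if "n \<ge> 1" for n
  proof -
    have "d n \<le> 2 powr (-1)" unfolding d_def using that by (intro powr_mono) auto
    also have "(2::real) powr (-1) = 1/2" by (simp add: powr_minus_divide)
    finally show ?thesis .
  qed
  obtain A B where AB: "A > 0" "B > 0" and R: "\<forall>d. 0 < d \<longrightarrow> d \<le> 1/2 \<longrightarrow> (\<forall>t\<in>{1-2*d..1-d}.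
            A * \<phi> (1-d) \<le> \<phi> t \<and> \<phi> t \<le> B * \<phi> (1-d))"
    using phi_ratio[OF phi_pos phi_cont phi_rv rho_pos] by blast
  have main: "A * d n * \<phi> (1 - d n)
                \<le> L2norm01 (\<lambda>t. indicator {c (n-1)<..<c n} t * 1)
                   * L2norm01 (\<lambda>t. indicator {c (n-1)<..<c n} t * \<phi> t) \<and>
              L2norm01 (\<lambda>t. indicator {c (n-1)<..<c n} t * 1)
                   * L2norm01 (\<lambda>t. indicator {c (n-1)<..<c n} t * \<phi> t)
                \<le> B * d n * \<phi> (1 - d n)" if n1: "n \<ge> 1" for n
  proof -
    have ca: "c (n-1) = 1 - 2 * d n" using c_eq[of "n-1"] dprev[OF n1] by simp
    have cb: "c n = 1 - d n" by (rule c_eq)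
    have a0: "0 \<le> c (n-1)" by (rule c_ge0)
    have ab: "c (n-1) < c n" using ca cb dpos[of n] by simp
    have b1: "c n < 1" using c_lt1 by simp
    have pd: "\<phi> (1 - d n) > 0" using phi_pos dpos[of n] dle[OF n1] by simp
    have bd: "\<forall>t\<in>{c (n-1)..c n}. A * \<phi> (1 - d n) \<le> \<phi> t \<and> \<phi> t \<le> B * \<phi> (1 - d n)"
      using R dpos[of n] dle[OF n1] unfolding ca cb by blast
    have lo0: "0 \<le> A * \<phi> (1 - d n)" using AB pd by simp
    note LB = L2_bounds[OF a0 ab b1 phi_cont bd lo0]
    have LI: "L2norm01 (\<lambda>t. indicator {c (n-1)<..<c n} t * 1) = sqrt (d n)"
      using L2_ind[OF a0 less_imp_le[OF ab] less_imp_le[OF b1]] ca cb by simp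
    have diff: "c n - c (n-1) = d n" using ca cb by simp
    have dn0: "0 \<le> d n" using dpos[of n] by linarith
    have sq: "sqrt (d n) * sqrt (d n) = d n" using dn0 by simp
    have s0: "sqrt (d n) \<ge> 0" using dn0 by simp
    have "A * d n * \<phi> (1 - d n) = sqrt (d n) * (A * \<phi> (1 - d n) * sqrt (d n))"
      using sq by (simp add: algebra_simps)
    also have "\<dots> \<le> sqrt (d n) * L2norm01 (\<lambda>t. indicator {c (n-1)<..<c n} t * \<phi> t)"
      using LB s0 unfolding diff by (intro mult_left_mono) auto
    finally have l: "A * d n * \<phi> (1 - d n) \<le> sqrt (d n) * L2norm01 (\<lambda>t. indicator {c (n-1)<..<c n} t * \<phi> t)" .
    have "sqrt (d n) * L2norm01 (\<lambda>t. indicator {c (n-1)<..<c n} t * \<phi> t) \<le> sqrt (d n) * (B * \<phi> (1 - d n) * sqrt (d n))"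
      using LB s0 unfolding diff by (intro mult_left_mono) auto
    also have "\<dots> = B * d n * \<phi> (1 - d n)"
      using sq by (simp add: algebra_simps)
    finally have u: "sqrt (d n) * L2norm01 (\<lambda>t. indicator {c (n-1)<..<c n} t * \<phi> t) \<le> B * d n * \<phi> (1 - d n)" .
    show ?thesis using l u unfolding LI by simp
  qed
  show ?thesis
    using AB main unfolding d_def by blast
qed

end
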